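(* Let $\mu\in\mathbb F_q\setminus\{0\}$. Every line of $\mathcal W_0$ has $0$, $1$, $2$ or $q+1$ points in common with $\mathcal Q_\mu$, and each of these four values occurs for some line of $\mathcal W_0$.
   Context: Let $q$ be an even prime power and $n\ge 2$ an integer. Let $\mathrm{PG}(2n+1,q)$ have homogeneous coordinates $(X_1,\dots,X_{2n+2})$. Fix $\delta\in\mathbb F_q$ such that $X^2+X+\delta$ is irreducible over $\mathbb F_q$. For $\mu\in\mathbb F_q$ let $\mathcal Q_\mu$ be the elliptic quadric $X_1^2+X_1X_{2n+2}+\delta X_{2n+2}^2+\sum_{i=2}^{n+1}X_iX_{2n+3-i}+\mu(X_{2n}^2+X_{2n}X_{2n+1}+\delta X_{2n+1}^2)=0$. Let $\mathcal W_0$ be the symplectic polar space defined by the alternating form $B_0(X,Y)=\sum_{i=1}^{2n+2}X_iY_{2n+3-i}$; its lines are the totally isotropic lines. *)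

theory Defs
  imports "HOL-Computational_Algebra.Polynomial" "HOL-Library.Cardinality"
begin

text \<open>Vectors of F_q^(2n+2), coordinates indexed 1..2n+2 (all other coordinates zero).\<close>
definition vecs :: "nat \<Rightarrow> (nat \<Rightarrow> 'a::field) set" where
  "vecs n = {x. \<forall>i. (i < 1 \<or> i > 2*n+2) \<longrightarrow> x i = 0}"

definition pt :: "(nat \<Rightarrow> 'a::field) \<Rightarrow> (nat \<Rightarrow> 'a) set" where
  "pt x = {(\<lambda>i. c * x i) | c. c \<noteq> 0}"

definition B0 :: "nat \<Rightarrow> (nat \<Rightarrow> 'a::field) \<Rightarrow> (nat \<Rightarrow> 'a) \<Rightarrow> 'a" where
  "B0 n x y = (\<Sum>i=1..2*n+2. x i * y (2*n+3-i))"

definition Qmu :: "nat \<Rightarrow> 'a::field \<Rightarrow> 'a \<Rightarrow> (nat \<Rightarrow> 'a) \<Rightarrow> 'a" where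
  "Qmu n \<delta> \<mu> x = x 1 ^ 2 + x 1 * x (2*n+2) + \<delta> * x (2*n+2) ^ 2
     + (\<Sum>i=2..n+1. x i * x (2*n+3-i))
     + \<mu> * (x (2*n) ^ 2 + x (2*n) * x (2*n+1) + \<delta> * x (2*n+1) ^ 2)"

definition line_pts :: "(nat \<Rightarrow> 'a::field) \<Rightarrow> (nat \<Rightarrow> 'a) \<Rightarrow> (nat \<Rightarrow> 'a) set set" where
  "line_pts u v = {pt (\<lambda>i. a * u i + b * v i) | a b. a \<noteq> 0 \<or> b \<noteq> 0}"

definition W0_line :: "nat \<Rightarrow> (nat \<Rightarrow> 'a::field) set set \<Rightarrow> bool" where
  "W0_line n L \<longleftrightarrow> (\<exists>u v. u \<in> vecs n \<and> v \<in> vecs n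
     \<and> (\<forall>a b. (\<forall>i. a * u i + b * v i = 0) \<longrightarrow> a = 0 \<and> b = 0)
     \<and> (\<forall>a b c d. B0 n (\<lambda>i. a * u i + b * v i) (\<lambda>i. c * u i + d * v i) = 0)
     \<and> L = line_pts u v)"

definition on_quadric :: "nat \<Rightarrow> 'a::field \<Rightarrow> 'a \<Rightarrow> (nat \<Rightarrow> 'a) set set \<Rightarrow> (nat \<Rightarrow> 'a) set set" where
  "on_quadric n \<delta> \<mu> L = {P \<in> L. \<forall>x\<in>P. Qmu n \<delta> \<mu> x = 0}"

end

theory Submission
  imports Defs
begin

lemma invol_even:
  assumes "finite S" "\<forall>x\<in>S. f x \<in> S \<and> f (f x) = x \<and> f x \<noteq> x"
  shows "even (card S)"
  using assms
proof (induction "card S" arbitrary: S rule: less_induct)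
  case less
  show ?case
  proof (cases "S = {}")
    case True then show ?thesis by simp
  next
    case False
    then obtain x where x: "x \<in> S" by blast
    let ?T = "S - {x, f x}"
    have fx: "f x \<in> S" "f x \<noteq> x" using less.prems x by auto
    have c2: "card {x, f x} = 2" using fx by simp
    have sub: "{x, f x} \<subseteq> S" using x fx by auto
    have cT: "card ?T = card S - 2" using sub c2 less.prems(1) by (simp add: card_Diff_subset)
    have ge: "card S \<ge> 2" using card_mono[OF less.prems(1) sub] c2 by simp
    have "even (card ?T)"
    proof (rule less.hyps)
      show "card ?T < card S" using cT ge by simp
      show "finite ?T" using less.prems(1) by simp
      show "\<forall>y\<in>?T. f y \<in> ?T \<and> f (f y) = y \<and> f y \<noteq> y"
      proof
        fix y assume y: "y \<in> ?T"
        have p: "f y \<in> S" "f (f y) = y" "f y \<noteq> y" "f (f x) = x" using less.prems(2) x y by auto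
        have "f y \<noteq> x" using p y by auto
        moreover have "f y \<noteq> f x" using p y by (metis DiffE insertCI)
        ultimately show "f y \<in> ?T \<and> f (f y) = y \<and> f y \<noteq> y" using p by auto
      qed
    qed
    then show ?thesis using cT ge by simp
  qed
qed

lemma char2:
  assumes "even CARD('a::{field,finite})"
  shows "(1::'a) + 1 = 0"
proof (rule ccontr)
  assume h: "(1::'a) + 1 \<noteq> 0"
  let ?S = "UNIV - {0::'a}"
  have "even (card ?S)"
  proof (rule invol_even[where f=uminus])
    show "finite ?S" by simp
    show "\<forall>x\<in>?S. - x \<in> ?S \<and> - (- x) = x \<and> - x \<noteq> x"
    proof
      fix x assume x: "x \<in> ?S"
      have "- x \<noteq> x"
      proof
        assume "- x = x"
        then have "(1+1) * x = 0" by (metis add.right_inverse distrib_right mult_1)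
        then show False using h x by simp
      qed
      then show "- x \<in> ?S \<and> - (- x) = x \<and> - x \<noteq> x" using x by simp
    qed
  qed
  moreover have "card ?S = CARD('a) - 1" by (simp add: card_Diff_subset)
  moreover have "CARD('a) \<ge> 1" by (simp add: Suc_leI)
  ultimately show False using assms by auto
qed

lemma no_root:
  fixes \<delta> :: "'a::field"
  assumes "irreducible [:\<delta>, 1, 1:]"
  shows "t^2 + t + \<delta> \<noteq> 0"
proof
  assume r: "t^2 + t + \<delta> = 0"
  have "poly [:\<delta>, 1, 1:] t = 0" using r by (simp add: power2_eq_square algebra_simps)
  then have "[:- t, 1:] dvd [:\<delta>, 1, 1:]" by (simp only: poly_eq_0_iff_dvd)
  then obtain q where q: "[:\<delta>, 1, 1:] = [:- t, 1:] * q" by (rule dvdE)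
  have q0: "q \<noteq> 0" using q by auto
  have "degree [:\<delta>, 1, 1:] = degree [:- t, 1:] + degree q" unfolding q by (rule degree_mult_eq) (use q0 in auto)
  then have dq: "degree q = 1" by simp
  from irreducibleD[OF assms q] have "is_unit [:- t, 1:] \<or> is_unit q" .
  then show False using dq by (auto simp: is_unit_iff_degree q0)
qed

lemma pt_scale: "(c::'a::field) \<noteq> 0 \<Longrightarrow> pt (\<lambda>i. c * x i) = pt x"
proof -
  assume c: "c \<noteq> 0"
  show ?thesis
  proof (rule set_eqI)
    fix y
    show "y \<in> pt (\<lambda>i. c * x i) \<longleftrightarrow> y \<in> pt x"
    proof
      assume "y \<in> pt (\<lambda>i. c * x i)"
      then obtain d where d: "d \<noteq> 0" "y = (\<lambda>i. d * (c * x i))" by (auto simp: pt_def)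
      then have "y = (\<lambda>i. (d*c) * x i)" by (simp add: mult.assoc)
      then show "y \<in> pt x" using d c by (auto simp: pt_def)
    next
      assume "y \<in> pt x"
      then obtain d where d: "d \<noteq> 0" "y = (\<lambda>i. d * x i)" by (auto simp: pt_def)
      then have "y = (\<lambda>i. (d/c) * (c * x i))" using c by auto
      then show "y \<in> pt (\<lambda>i. c * x i)" using d c unfolding pt_def
        by (intro CollectI exI[where x="d/c"]) auto
    qed
  qed
qed

lemma pt_self: "x \<in> pt (x::nat \<Rightarrow> 'a::field)"
  unfolding pt_def by (rule CollectI, rule exI[where x=1]) auto

lemma pt_eqD: "pt x = pt (y::nat \<Rightarrow> 'a::field) \<Longrightarrow> \<exists>c. c \<noteq> 0 \<and> y = (\<lambda>i. c * x i)"
  using pt_self[of y] by (auto simp: pt_def)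

lemma Q_hom: "Qmu n \<delta> \<mu> (\<lambda>i. c * x i) = c^2 * Qmu n \<delta> \<mu> (x :: nat \<Rightarrow> 'a::field)"
  unfolding Qmu_def
  by (simp add: sum_distrib_left power2_eq_square algebra_simps)

lemma quad_pt: "(\<forall>y\<in>pt x. Qmu n \<delta> \<mu> y = 0) \<longleftrightarrow> Qmu n \<delta> \<mu> (x :: nat \<Rightarrow> 'a::field) = 0"
  using pt_self[of x] by (auto simp: pt_def Q_hom)

lemma Q_lin: "\<exists>C. \<forall>a b. Qmu n \<delta> \<mu> (\<lambda>i. a * u i + b * v i) =
    a^2 * Qmu n \<delta> \<mu> u + a * b * C + b^2 * Qmu n \<delta> \<mu> (v :: nat \<Rightarrow> 'a::field)"
proof -
  let ?N = "2*n+2"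
  define C where "C = 2 * u 1 * v 1 + u 1 * v ?N + u ?N * v 1 + 2 * \<delta> * u ?N * v ?N
     + (\<Sum>i=2..n+1. u i * v (2*n+3-i) + v i * u (2*n+3-i))
     + \<mu> * (2 * u (2*n) * v (2*n) + u (2*n) * v (2*n+1) + v (2*n) * u (2*n+1) + 2 * \<delta> * u (2*n+1) * v (2*n+1))"
  have s: "(\<Sum>i=2..n+1. (a * u i + b * v i) * (a * u (2*n+3-i) + b * v (2*n+3-i))) =
     a^2 * (\<Sum>i=2..n+1. u i * u (2*n+3-i)) + a * b * (\<Sum>i=2..n+1. u i * v (2*n+3-i) + v i * u (2*n+3-i))
     + b^2 * (\<Sum>i=2..n+1. v i * v (2*n+3-i))" for a b
    by (simp add: sum_distrib_left sum.distrib[symmetric] power2_eq_square algebra_simps)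
  show ?thesis
    by (rule exI[where x=C], intro allI, unfold Qmu_def s, unfold C_def)
       (simp add: power2_eq_square algebra_simps)
qed

lemma sum_supp:
  assumes "finite T" "S \<subseteq> T" "\<forall>i\<in>T - S. g i = 0"
  shows "sum g T = sum g S"
  using sum.mono_neutral_right[OF assms] .

lemma Q_supp:
  assumes n: "n \<ge> 2" and x: "\<forall>i. i \<notin> {2,3,2*n,2*n+1} \<longrightarrow> x i = 0"
  shows "Qmu n \<delta> \<mu> x = x 2 * x (2*n+1) + x 3 * x (2*n)
     + \<mu> * (x (2*n)^2 + x (2*n) * x (2*n+1) + \<delta> * x (2*n+1)^2)"
proof -
  have s: "(\<Sum>i=2..n+1. x i * x (2*n+3-i)) = (\<Sum>i\<in>{2,3}. x i * x (2*n+3-i))"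
    by (rule sum_supp) (use n x in auto)
  have "x 1 = 0" "x (2*n+2) = 0" using x n by auto
  then show ?thesis unfolding Qmu_def s using n by simp
qed

lemma B_supp:
  assumes n: "n \<ge> 2" and x: "\<forall>i. i \<notin> {2,3,2*n,2*n+1} \<longrightarrow> x i = 0"
  shows "B0 n x y = x 2 * y (2*n+1) + x 3 * y (2*n) + x (2*n) * y 3 + x (2*n+1) * y 2"
proof -
  have s: "(\<Sum>i=1..2*n+2. x i * y (2*n+3-i)) = (\<Sum>i\<in>{2,3,2*n,2*n+1}. x i * y (2*n+3-i))"
    by (rule sum_supp) (use n x in auto)
  show ?thesis unfolding B0_def s using n by (simp add: algebra_simps)
qed

lemma line_eq:
  "line_pts u v = insert (pt v) (range (\<lambda>t. pt (\<lambda>i. u i + t * v i)))"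
  (is "_ = insert _ (range ?g)")
proof (rule set_eqI)
  fix P show "P \<in> line_pts u v \<longleftrightarrow> P \<in> insert (pt v) (range ?g)"
  proof
    assume "P \<in> line_pts u v"
    then obtain a b where ab: "a \<noteq> 0 \<or> b \<noteq> 0" "P = pt (\<lambda>i. a*u i + b*v i)"
      by (auto simp: line_pts_def)
    show "P \<in> insert (pt v) (range ?g)"
    proof (cases "a = 0")
      case True
      then have "P = pt (\<lambda>i. b * v i)" using ab by simp
      also have "\<dots> = pt v" using True ab by (simp add: pt_scale)
      finally show ?thesis by simp
    next
      case False
      have "(\<lambda>i. a*u i + b*v i) = (\<lambda>i. a * (u i + (b/a) * v i))" using False
        by (auto simp: field_simps)
      then have eq: "P = pt (\<lambda>i. u i + (b/a) * v i)" using ab False by (simp add: pt_scale)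
      show ?thesis unfolding eq by (rule insertI2, rule rangeI)
    qed
  next
    assume "P \<in> insert (pt v) (range ?g)"
    then show "P \<in> line_pts u v" unfolding line_pts_def
    proof
      assume "P = pt v"
      then show "P \<in> {pt (\<lambda>i. a * u i + b * v i) |a b. a \<noteq> 0 \<or> b \<noteq> 0}"
        by (intro CollectI exI[where x=0] exI[where x=1]) simp
    next
      assume "P \<in> range ?g"
      then obtain t where "P = ?g t" by auto
      then show "P \<in> {pt (\<lambda>i. a * u i + b * v i) |a b. a \<noteq> 0 \<or> b \<noteq> 0}"
        by (intro CollectI exI[where x=1] exI[where x=t]) simp
    qed
  qed
qed

lemma g_inj:
  fixes u v :: "nat \<Rightarrow> 'a::field"
  assumes ind: "\<forall>a b. (\<forall>i. a * u i + b * v i = 0) \<longrightarrow> a = 0 \<and> b = 0"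
  shows "inj (\<lambda>t. pt (\<lambda>i. u i + t * v i))"
proof (rule injI)
  fix s t assume "pt (\<lambda>i. u i + s * v i) = pt (\<lambda>i. u i + t * v i)"
  then obtain c where c: "c \<noteq> 0" "(\<lambda>i. u i + t * v i) = (\<lambda>i. c * (u i + s * v i))"
    using pt_eqD by blast
  have "\<forall>i. (1 - c) * u i + (t - c * s) * v i = 0"
  proof
    fix i have "u i + t * v i = c * (u i + s * v i)" using c(2) by metis
    then show "(1 - c) * u i + (t - c * s) * v i = 0" by (simp add: algebra_simps)
  qed
  then have "1 - c = 0" "t - c * s = 0" using ind by blast+
  then show "s = t" by simp
qed

lemma pv_notin:
  fixes u v :: "nat \<Rightarrow> 'a::field"
  assumes ind: "\<forall>a b. (\<forall>i. a * u i + b * v i = 0) \<longrightarrow> a = 0 \<and> b = 0"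
  shows "pt v \<notin> range (\<lambda>t. pt (\<lambda>i. u i + t * v i))"
proof
  assume "pt v \<in> range (\<lambda>t. pt (\<lambda>i. u i + t * v i))"
  then obtain t where "pt v = pt (\<lambda>i. u i + t * v i)" by auto
  then obtain c where c: "c \<noteq> 0" "(\<lambda>i. u i + t * v i) = (\<lambda>i. c * v i)"
    using pt_eqD by blast
  have "\<forall>i. 1 * u i + (t - c) * v i = 0"
  proof
    fix i have "u i + t * v i = c * v i" using c(2) by metis
    then show "1 * u i + (t - c) * v i = 0" by (simp add: algebra_simps)
  qed
  then have "(1::'a) = 0" using ind by blast
  then show False by simp
qed

lemma card_line:
  fixes u v :: "nat \<Rightarrow> 'a::{field,finite}"
  assumes ind: "\<forall>a b. (\<forall>i. a * u i + b * v i = 0) \<longrightarrow> a = 0 \<and> b = 0"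
  shows "card (line_pts u v) = CARD('a) + 1"
proof -
  have "card (range (\<lambda>t. pt (\<lambda>i. u i + t * v i))) = CARD('a)"
    using g_inj[OF ind] by (simp add: card_image)
  then show ?thesis unfolding line_eq using pv_notin[OF ind] by simp
qed

lemma onq_eq:
  "on_quadric n \<delta> \<mu> (line_pts u v) = (if Qmu n \<delta> \<mu> v = 0 then {pt v} else {})
     \<union> (\<lambda>t. pt (\<lambda>i. u i + t * v i)) ` {t. Qmu n \<delta> \<mu> (\<lambda>i. u i + t * v i) = 0}"
proof (rule set_eqI)
  let ?g = "\<lambda>t. pt (\<lambda>i. u i + t * v i)"
  fix P
  show "P \<in> on_quadric n \<delta> \<mu> (line_pts u v) \<longleftrightarrow> P \<in> (if Qmu n \<delta> \<mu> v = 0 then {pt v} else {})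
     \<union> ?g ` {t. Qmu n \<delta> \<mu> (\<lambda>i. u i + t * v i) = 0}"
  proof
    assume "P \<in> on_quadric n \<delta> \<mu> (line_pts u v)"
    then have P: "P \<in> insert (pt v) (range ?g)" and z: "\<forall>x\<in>P. Qmu n \<delta> \<mu> x = 0"
      unfolding on_quadric_def line_eq by auto
    show "P \<in> (if Qmu n \<delta> \<mu> v = 0 then {pt v} else {})
     \<union> ?g ` {t. Qmu n \<delta> \<mu> (\<lambda>i. u i + t * v i) = 0}"
    proof (cases "P = pt v")
      case True
      then have "Qmu n \<delta> \<mu> v = 0" using z quad_pt by metis
      then show ?thesis using True by simp
    next
      case False
      then obtain t where t: "P = ?g t" using P by auto
      then have "Qmu n \<delta> \<mu> (\<lambda>i. u i + t * v i) = 0" using z quad_pt by metis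
      then show ?thesis using t by blast
    qed
  next
    assume h: "P \<in> (if Qmu n \<delta> \<mu> v = 0 then {pt v} else {})
     \<union> ?g ` {t. Qmu n \<delta> \<mu> (\<lambda>i. u i + t * v i) = 0}"
    show "P \<in> on_quadric n \<delta> \<mu> (line_pts u v)"
    proof (cases "P \<in> (if Qmu n \<delta> \<mu> v = 0 then {pt v} else {})")
      case True
      then have "P = pt v" "Qmu n \<delta> \<mu> v = 0" by (auto split: if_splits)
      then show ?thesis unfolding on_quadric_def line_eq using quad_pt by blast
    next
      case False
      then obtain t where t: "P = ?g t" "Qmu n \<delta> \<mu> (\<lambda>i. u i + t * v i) = 0" using h by auto
      then show ?thesis unfolding on_quadric_def line_eq using quad_pt by blast
    qed
  qed
qed

lemma onq_card:
  fixes u v :: "nat \<Rightarrow> 'a::{field,finite}"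
  assumes ind: "\<forall>a b. (\<forall>i. a * u i + b * v i = 0) \<longrightarrow> a = 0 \<and> b = 0"
  shows "card (on_quadric n \<delta> \<mu> (line_pts u v)) = (if Qmu n \<delta> \<mu> v = 0 then 1 else 0)
     + card {t. Qmu n \<delta> \<mu> (\<lambda>i. u i + t * v i) = 0}"
proof -
  let ?g = "\<lambda>t. pt (\<lambda>i. u i + t * v i)"
  let ?R = "{t. Qmu n \<delta> \<mu> (\<lambda>i. u i + t * v i) = 0}"
  have d: "(if Qmu n \<delta> \<mu> v = 0 then {pt v} else {}) \<inter> ?g ` ?R = {}"
    using pv_notin[OF ind] by auto
  have ci: "card (?g ` ?R) = card ?R"
    using g_inj[OF ind] by (simp add: card_image inj_on_subset)
  show ?thesis unfolding onq_eq
    by (subst card_Un_disjoint) (use d ci in auto)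
qed

lemma line_quad_card:
  fixes u v :: "nat \<Rightarrow> 'a::{field,finite}"
  assumes ind: "\<forall>a b. (\<forall>i. a * u i + b * v i = 0) \<longrightarrow> a = 0 \<and> b = 0"
  shows "card (on_quadric n \<delta> \<mu> (line_pts u v)) \<in> {0, 1, 2, CARD('a) + 1}"
proof -
  let ?A = "Qmu n \<delta> \<mu> u" and ?B = "Qmu n \<delta> \<mu> v"
  obtain C where C: "\<forall>a b. Qmu n \<delta> \<mu> (\<lambda>i. a * u i + b * v i) = a^2 * ?A + a * b * C + b^2 * ?B"
    using Q_lin by blast
  have R: "{t. Qmu n \<delta> \<mu> (\<lambda>i. u i + t * v i) = 0} = {t. poly [:?A, C, ?B:] t = 0}"
  proof -
    have "Qmu n \<delta> \<mu> (\<lambda>i. u i + t * v i) = poly [:?A, C, ?B:] t" for t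
      using C[rule_format, of 1 t] by (simp add: power2_eq_square algebra_simps)
    then show ?thesis by simp
  qed
  show ?thesis
  proof (cases "?A = 0 \<and> C = 0 \<and> ?B = 0")
    case True
    then have "on_quadric n \<delta> \<mu> (line_pts u v) = insert (pt v) (range (\<lambda>t. pt (\<lambda>i. u i + t * v i)))"
      unfolding onq_eq R by auto
    then have "on_quadric n \<delta> \<mu> (line_pts u v) = line_pts u v" by (simp only: line_eq)
    then show ?thesis using card_line[OF ind] by simp
  next
    case False
    then have p0: "[:?A, C, ?B:] \<noteq> 0" by auto
    have cr: "card {t. poly [:?A, C, ?B:] t = 0} \<le> degree [:?A, C, ?B:]"
      by (rule card_poly_roots_bound[OF p0])
    have "card (on_quadric n \<delta> \<mu> (line_pts u v)) \<le> 2"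
    proof (cases "?B = 0")
      case True
      have "degree [:?A, C, ?B:] \<le> 1" using True by simp
      then have c1: "card {t. poly [:?A, C, ?B:] t = 0} \<le> 1" using cr by linarith
      show ?thesis unfolding onq_card[OF ind] R using c1 True by simp
    next
      case False
      have "degree [:?A, C, ?B:] \<le> 2" by simp
      then have c1: "card {t. poly [:?A, C, ?B:] t = 0} \<le> 2" using cr by linarith
      show ?thesis unfolding onq_card[OF ind] R using c1 False by simp
    qed
    then show ?thesis by auto
  qed
qed

lemma W0_intro:
  fixes u v :: "nat \<Rightarrow> 'a::field"
  assumes n: "n \<ge> 2"
    and su: "\<forall>i. i \<notin> {2,3,2*n,2*n+1} \<longrightarrow> u i = 0"
    and sv: "\<forall>i. i \<notin> {2,3,2*n,2*n+1} \<longrightarrow> v i = 0"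
    and ind: "\<forall>a b. (\<forall>i. a * u i + b * v i = 0) \<longrightarrow> a = 0 \<and> b = 0"
    and B: "\<forall>a b c d. (a * u 2 + b * v 2) * (c * u (2*n+1) + d * v (2*n+1))
       + (a * u 3 + b * v 3) * (c * u (2*n) + d * v (2*n))
       + (a * u (2*n) + b * v (2*n)) * (c * u 3 + d * v 3)
       + (a * u (2*n+1) + b * v (2*n+1)) * (c * u 2 + d * v 2) = 0"
  shows "W0_line n (line_pts u v)"
proof -
  have vu: "u \<in> vecs n" "v \<in> vecs n" using su sv n unfolding vecs_def by auto
  have BB: "\<forall>a b c d. B0 n (\<lambda>i. a * u i + b * v i) (\<lambda>i. c * u i + d * v i) = 0"
  proof (intro allI)
    fix a b c d :: 'a
    have sx: "\<forall>i. i \<notin> {2,3,2*n,2*n+1} \<longrightarrow> a * u i + b * v i = 0" using su sv by simp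
    show "B0 n (\<lambda>i. a * u i + b * v i) (\<lambda>i. c * u i + d * v i) = 0"
      unfolding B_supp[OF n sx] using B by blast
  qed
  show ?thesis unfolding W0_line_def using vu ind BB by blast
qed
definition ev :: "nat \<Rightarrow> nat \<Rightarrow> 'a::field" where "ev k = (\<lambda>i. if i = k then 1 else 0)"

lemma ex0:
  fixes \<delta> \<mu> :: "'a::{field,finite}"
  assumes n: "n \<ge> 2" and mu: "\<mu> \<noteq> 0" and nr: "\<And>t::'a. t^2 + t + \<delta> \<noteq> 0"
  shows "\<exists>L. W0_line n L \<and> card (on_quadric n \<delta> \<mu> L) = 0"
proof -
  let ?u = "ev (2*n+1) :: nat \<Rightarrow> 'a" and ?v = "ev (2*n)"
  have ind: "\<forall>a b. (\<forall>i. a * ?u i + b * ?v i = 0) \<longrightarrow> a = 0 \<and> b = 0"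
  proof (intro allI impI)
    fix a b :: 'a assume h: "\<forall>i. a * ?u i + b * ?v i = 0"
    show "a = 0 \<and> b = 0" using h[rule_format, of "2*n+1"] h[rule_format, of "2*n"] by (simp add: ev_def)
  qed
  have W: "W0_line n (line_pts ?u ?v)"
    by (rule W0_intro[OF n _ _ ind]) (use n in \<open>simp_all add: ev_def\<close>)
  have Qv: "Qmu n \<delta> \<mu> ?v = \<mu>" by (subst Q_supp[OF n]) (use n in \<open>simp_all add: ev_def\<close>)
  have Qt: "Qmu n \<delta> \<mu> (\<lambda>i. ?u i + t * ?v i) = \<mu> * (t^2 + t + \<delta>)" for t
    by (subst Q_supp[OF n]) (use n in \<open>simp_all add: ev_def power2_eq_square algebra_simps\<close>)
  have "card (on_quadric n \<delta> \<mu> (line_pts ?u ?v)) = 0"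
    unfolding onq_card[OF ind] Qv Qt using mu nr by simp
  then show ?thesis using W by blast
qed

lemma ex1:
  fixes \<delta> \<mu> :: "'a::{field,finite}"
  assumes n: "n \<ge> 2" and mu: "\<mu> \<noteq> 0"
  shows "\<exists>L. W0_line n L \<and> card (on_quadric n \<delta> \<mu> L) = 1"
proof -
  let ?u = "ev 2 :: nat \<Rightarrow> 'a" and ?v = "ev (2*n)"
  have ind: "\<forall>a b. (\<forall>i. a * ?u i + b * ?v i = 0) \<longrightarrow> a = 0 \<and> b = 0"
  proof (intro allI impI)
    fix a b :: 'a assume h: "\<forall>i. a * ?u i + b * ?v i = 0"
    show "a = 0 \<and> b = 0" using h[rule_format, of "2"] h[rule_format, of "2*n"] n by (simp add: ev_def)
  qed
  have W: "W0_line n (line_pts ?u ?v)"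
    by (rule W0_intro[OF n _ _ ind]) (use n in \<open>simp_all add: ev_def\<close>)
  have Qv: "Qmu n \<delta> \<mu> ?v = \<mu>" by (subst Q_supp[OF n]) (use n in \<open>simp_all add: ev_def\<close>)
  have Qt: "Qmu n \<delta> \<mu> (\<lambda>i. ?u i + t * ?v i) = \<mu> * t^2" for t
    by (subst Q_supp[OF n]) (use n in \<open>simp_all add: ev_def power2_eq_square algebra_simps\<close>)
  have R: "{t. \<mu> * t^2 = 0} = {0}" using mu by auto
  have "card (on_quadric n \<delta> \<mu> (line_pts ?u ?v)) = 1"
    unfolding onq_card[OF ind] Qv Qt R using mu by simp
  then show ?thesis using W by blast
qed

lemma exq:
  fixes \<delta> \<mu> :: "'a::{field,finite}"
  assumes n: "n \<ge> 2"
  shows "\<exists>L. W0_line n L \<and> card (on_quadric n \<delta> \<mu> L) = CARD('a) + 1"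
proof -
  let ?u = "ev 2 :: nat \<Rightarrow> 'a" and ?v = "ev 3"
  have ind: "\<forall>a b. (\<forall>i. a * ?u i + b * ?v i = 0) \<longrightarrow> a = 0 \<and> b = 0"
  proof (intro allI impI)
    fix a b :: 'a assume h: "\<forall>i. a * ?u i + b * ?v i = 0"
    show "a = 0 \<and> b = 0" using h[rule_format, of "2"] h[rule_format, of "3"] by (simp add: ev_def)
  qed
  have W: "W0_line n (line_pts ?u ?v)"
    by (rule W0_intro[OF n _ _ ind]) (use n in \<open>simp_all add: ev_def\<close>)
  have Qv: "Qmu n \<delta> \<mu> ?v = 0" by (subst Q_supp[OF n]) (use n in \<open>simp_all add: ev_def\<close>)
  have Qt: "Qmu n \<delta> \<mu> (\<lambda>i. ?u i + t * ?v i) = 0" for t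
    by (subst Q_supp[OF n]) (use n in \<open>simp_all add: ev_def\<close>)
  have "card (on_quadric n \<delta> \<mu> (line_pts ?u ?v)) = CARD('a) + 1"
    unfolding onq_card[OF ind] Qv Qt by simp
  then show ?thesis using W by blast
qed

lemma ex2:
  fixes \<delta> \<mu> :: "'a::{field,finite}"
  assumes n: "n \<ge> 2" and mu: "\<mu> \<noteq> 0" and two: "(2::'a) = 0"
  shows "\<exists>L. W0_line n L \<and> card (on_quadric n \<delta> \<mu> L) = 2"
proof -
  define u :: "nat \<Rightarrow> 'a" where "u = (\<lambda>i. if i = 2*n+1 then 1 else if i = 2 then - (\<mu> * \<delta>) else 0)"
  let ?v = "ev (2*n) :: nat \<Rightarrow> 'a"
  have ind: "\<forall>a b. (\<forall>i. a * u i + b * ?v i = 0) \<longrightarrow> a = 0 \<and> b = 0"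
  proof (intro allI impI)
    fix a b :: 'a assume h: "\<forall>i. a * u i + b * ?v i = 0"
    show "a = 0 \<and> b = 0" using h[rule_format, of "2*n+1"] h[rule_format, of "2*n"] n by (simp add: ev_def u_def)
  qed
  have W: "W0_line n (line_pts u ?v)"
  proof (rule W0_intro[OF n _ _ ind])
    show "\<forall>i. i \<notin> {2, 3, 2 * n, 2 * n + 1} \<longrightarrow> u i = 0" by (simp add: u_def)
    show "\<forall>i. i \<notin> {2, 3, 2 * n, 2 * n + 1} \<longrightarrow> ?v i = 0" by (simp add: ev_def)
    show "\<forall>a b c d. (a * u 2 + b * ?v 2) * (c * u (2*n+1) + d * ?v (2*n+1))
     + (a * u 3 + b * ?v 3) * (c * u (2*n) + d * ?v (2*n))
     + (a * u (2*n) + b * ?v (2*n)) * (c * u 3 + d * ?v 3)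
     + (a * u (2*n+1) + b * ?v (2*n+1)) * (c * u 2 + d * ?v 2) = 0"
    proof (intro allI)
      fix a b c d :: 'a
      have "(a * u 2 + b * ?v 2) * (c * u (2*n+1) + d * ?v (2*n+1))
       + (a * u 3 + b * ?v 3) * (c * u (2*n) + d * ?v (2*n))
       + (a * u (2*n) + b * ?v (2*n)) * (c * u 3 + d * ?v 3)
       + (a * u (2*n+1) + b * ?v (2*n+1)) * (c * u 2 + d * ?v 2) = 2 * (- (a * c * \<mu> * \<delta>))"
        using n by (simp add: u_def ev_def algebra_simps)
      then show "(a * u 2 + b * ?v 2) * (c * u (2*n+1) + d * ?v (2*n+1))
       + (a * u 3 + b * ?v 3) * (c * u (2*n) + d * ?v (2*n))
       + (a * u (2*n) + b * ?v (2*n)) * (c * u 3 + d * ?v 3)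
       + (a * u (2*n+1) + b * ?v (2*n+1)) * (c * u 2 + d * ?v 2) = 0" using two by simp
    qed
  qed
  have Qv: "Qmu n \<delta> \<mu> ?v = \<mu>" by (subst Q_supp[OF n]) (use n in \<open>simp_all add: ev_def\<close>)
  have Qt: "Qmu n \<delta> \<mu> (\<lambda>i. u i + t * ?v i) = \<mu> * (t * (t + 1))" for t
    by (subst Q_supp[OF n]) (use n in \<open>simp_all add: ev_def u_def power2_eq_square algebra_simps\<close>)
  have R: "{t. \<mu> * (t * (t + 1)) = 0} = {0, -1}" using mu by (auto simp: add_eq_0_iff minus_equation_iff[of _ 1])
  have "card (on_quadric n \<delta> \<mu> (line_pts u ?v)) = 2"
    unfolding onq_card[OF ind] Qv Qt R using mu by simp
  then show ?thesis using W by blast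
qed


theorem mainTheorem8:
  fixes \<delta> \<mu> :: "'a::{field,finite}" and n :: nat
  assumes "even CARD('a)"
    and "n \<ge> 2"
    and "irreducible [:\<delta>, 1, 1:]"
    and "\<mu> \<noteq> 0"
  shows "(\<forall>L. W0_line n L \<longrightarrow>
            card (on_quadric n \<delta> \<mu> L) \<in> {0, 1, 2, CARD('a) + 1})
       \<and> (\<forall>k \<in> {0, 1, 2, CARD('a) + 1}.
            \<exists>L. W0_line n L \<and> card (on_quadric n \<delta> \<mu> L) = k)"
proof (intro conjI)
  note n = assms(2) and mu = assms(4)
  have two: "(2::'a) = 0" using char2[OF assms(1)] by (metis one_add_one)
  have nr: "\<And>t::'a. t^2 + t + \<delta> \<noteq> 0" using no_root[OF assms(3)] .
  show "\<forall>L. W0_line n L \<longrightarrow> card (on_quadric n \<delta> \<mu> L) \<in> {0, 1, 2, CARD('a) + 1}"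
  proof (intro allI impI)
    fix L :: "(nat \<Rightarrow> 'a) set set" assume "W0_line n L"
    then obtain u v :: "nat \<Rightarrow> 'a" where ind: "\<forall>a b. (\<forall>i. a * u i + b * v i = 0) \<longrightarrow> a = 0 \<and> b = 0"
      and L: "L = line_pts u v" unfolding W0_line_def by blast
    show "card (on_quadric n \<delta> \<mu> L) \<in> {0, 1, 2, CARD('a) + 1}"
      unfolding L by (rule line_quad_card[OF ind])
  qed
  show "\<forall>k \<in> {0, 1, 2, CARD('a) + 1}. \<exists>L. W0_line n L \<and> card (on_quadric n \<delta> \<mu> L) = k"
  proof
    fix k assume "k \<in> {0, 1, 2, CARD('a) + 1}"
    then have "k = 0 \<or> k = 1 \<or> k = 2 \<or> k = CARD('a) + 1" by simp
    then show "\<exists>L. W0_line n L \<and> card (on_quadric n \<delta> \<mu> L) = k"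
    proof (elim disjE)
      assume "k = 0" then show ?thesis using ex0[OF n mu nr] by simp
    next
      assume "k = 1" then show ?thesis using ex1[OF n mu] by simp
    next
      assume "k = 2" then show ?thesis using ex2[OF n mu two] by simp
    next
      assume "k = CARD('a) + 1" then show ?thesis using exq[OF n, of \<delta> \<mu>] by simp
    qed
  qed
qed

end
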